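(* Let $\varphi:\mathbb{D}\to\mathbb{D}$ be an inner function with $\varphi(0)\neq 0$, and let $C_\varphi f=f\circ\varphi$ be the corresponding composition operator on $H^2(\mathbb{D})$. Then for $f\in H^2(\mathbb{D})$, $$\|C_\varphi f\|=\sqrt{\frac{1+|\varphi(0)|}{1-|\varphi(0)|}}\;\|f\|$$ holds if and only if $f\equiv 0$. In particular, the operator norm $\|C_\varphi\|=\sqrt{\frac{1+|\varphi(0)|}{1-|\varphi(0)|}}$ is not attained by any nonzero function of $H^2(\mathbb{D})$.
   Context: $\mathbb{D}$ is the open unit disc. $H^2(\mathbb{D})$ is the Hardy space of holomorphic $f(z)=\sum_{n\ge0}a_nz^n$ on $\mathbb{D}$ with $\|f\|^2=\sum_{n\ge0}|a_n|^2<\infty$. An inner function is a holomorphic map $\varphi:\mathbb{D}\to\mathbb{D}$ whose radial limits satisfy $|\varphi(e^{i\theta})|=1$ for almost every $\theta\in[0,2\pi)$. For an inner function $\varphi$ it is known that $\|C_\varphi\|=\sqrt{(1+|\varphi(0)|)/(1-|\varphi(0)|)}$. *)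

theory Defs
  imports "HOL-Analysis.Analysis"
begin

abbreviation unit_disc :: "complex set" where
  "unit_disc \<equiv> ball 0 1"

definition taylor_coeff :: "(complex \<Rightarrow> complex) \<Rightarrow> nat \<Rightarrow> complex" where
  "taylor_coeff f n = (deriv ^^ n) f 0 / of_nat (fact n)"

definition H2 :: "(complex \<Rightarrow> complex) set" where
  "H2 = {f. f holomorphic_on unit_disc \<and> summable (\<lambda>n. (cmod (taylor_coeff f n))\<^sup>2)}"

definition H2_norm :: "(complex \<Rightarrow> complex) \<Rightarrow> real" where
  "H2_norm f = sqrt (\<Sum>n. (cmod (taylor_coeff f n))\<^sup>2)"

definition inner_function :: "(complex \<Rightarrow> complex) \<Rightarrow> bool" where
  "inner_function \<phi> \<longleftrightarrow>
     \<phi> holomorphic_on unit_disc \<and> \<phi> ` unit_disc \<subseteq> unit_disc \<and>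
     (AE \<theta> in lebesgue_on {0..<2*pi}.
        \<exists>L. ((\<lambda>r::real. \<phi> (complex_of_real r * cis \<theta>)) \<longlongrightarrow> L) (at_left 1) \<and> cmod L = 1)"

end

theory Submission
  imports Defs "HOL-Complex_Analysis.Complex_Analysis"
begin


definition ce :: "real \<Rightarrow> complex" where
  "ce t = exp (2 * of_real pi * \<i> * of_real t)"

lemma norm_ce [simp]: "cmod (ce t) = 1"
  unfolding ce_def by (simp add: norm_exp_eq_Re)

lemma ce_nonzero [simp]: "ce t \<noteq> 0"
  unfolding ce_def by simp

lemma cnj_ce: "cnj (ce t) = inverse (ce t)"
proof -
  have "cnj (ce t) = exp (-(2 * of_real pi * \<i> * of_real t))"
    unfolding ce_def by (simp add: exp_cnj)
  then show ?thesis by (simp add: exp_minus ce_def)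
qed

lemma ce_pow_cnj: "ce t ^ m * cnj (ce t) ^ n = exp (2 * of_real pi * \<i> * of_int (int m - int n) * of_real t)"
proof -
  have "ce t ^ m = exp (of_nat m * (2 * of_real pi * \<i> * of_real t))"
    unfolding ce_def by (simp add: exp_of_nat_mult)
  moreover have "cnj (ce t) ^ n = exp (- (of_nat n * (2 * of_real pi * \<i> * of_real t)))"
  proof -
    have "cnj (ce t) ^ n = inverse (ce t ^ n)" by (simp add: cnj_ce power_inverse)
    also have "ce t ^ n = exp (of_nat n * (2 * of_real pi * \<i> * of_real t))"
      unfolding ce_def by (simp add: exp_of_nat_mult)
    finally show ?thesis by (simp add: exp_minus)
  qed
  ultimately show ?thesis
    by (simp add: exp_add[symmetric] algebra_simps)
qed

lemma integral_exp_int: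
  fixes k :: int assumes "k \<noteq> 0"
  shows "((\<lambda>t. exp (2 * of_real pi * \<i> * of_int k * of_real t)) has_integral 0) {0..1::real}"
proof -
  define c where "c = 2 * of_real pi * \<i> * (of_int k :: complex)"
  have c0: "c \<noteq> 0" using assms by (simp add: c_def)
  have "((\<lambda>t. exp (c * of_real t)) has_integral (exp (c * of_real 1) / c - exp (c * of_real 0) / c)) {0..1::real}"
  proof (rule fundamental_theorem_of_calculus)
    fix x :: real
    have "((\<lambda>z. exp (c * z) / c) has_field_derivative exp (c * of_real x)) (at (of_real x))"
      using c0 by (auto intro!: derivative_eq_intros)
    then show "((\<lambda>t. exp (c * of_real t) / c) has_vector_derivative exp (c * of_real x)) (at x within {0..1})"
      by (rule has_vector_derivative_real_field)
  qed simp
  moreover have "exp c = 1"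
    using exp_integer_2pi[of "of_int k"] by (simp add: c_def algebra_simps)
  ultimately show ?thesis by (simp add: c_def)
qed

lemma ortho:
  "((\<lambda>t. ce t ^ m * cnj (ce t) ^ n) has_integral (if m = n then 1 else 0)) {0..1}"
proof (cases "m = n")
  case True
  then show ?thesis
    using has_integral_const_real[of "1::complex" 0 1] by (simp add: ce_pow_cnj)
next
  case False
  then have "int m - int n \<noteq> 0" by simp
  from integral_exp_int[OF this] False show ?thesis by (simp add: ce_pow_cnj)
qed


lemma continuous_on_ce [continuous_intros]: "continuous_on A ce"
  unfolding ce_def by (intro continuous_intros)

lemma uniform_limit_cnj:
  assumes "uniform_limit A f l F"
  shows "uniform_limit A (\<lambda>n x. cnj (f n x)) (\<lambda>x. cnj (l x)) F"
proof (rule uniform_limitI)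
  fix e :: real assume "e > 0"
  from uniform_limitD[OF assms this]
  show "\<forall>\<^sub>F n in F. \<forall>x\<in>A. dist (cnj (f n x)) (cnj (l x)) < e"
    by eventually_elim (simp add: dist_norm complex_cnj_diff[symmetric] del: complex_cnj_diff)
qed

lemma taylor_sums:
  assumes "g holomorphic_on ball 0 R" "cmod w < R"
  shows "(\<lambda>n. taylor_coeff g n * w ^ n) sums g w"
  using holomorphic_power_series[OF assms(1), of w] assms(2)
  by (simp add: taylor_coeff_def)

lemma partial_integral:
  "((\<lambda>t. (\<Sum>i<n. b i * (of_real r * ce t) ^ i) * cnj (\<Sum>i<n. b i * (of_real r * ce t) ^ i))
     has_integral of_real (\<Sum>i<n. (cmod (b i))\<^sup>2 * r ^ (2 * i))) {0..1}"
proof -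
  have eq: "(\<Sum>i<n. b i * (of_real r * ce t) ^ i) * cnj (\<Sum>i<n. b i * (of_real r * ce t) ^ i)
     = (\<Sum>j<n. \<Sum>i<n. (b i * cnj (b j) * of_real r ^ (i + j)) * (ce t ^ i * cnj (ce t) ^ j))" for t
    by (simp add: sum_distrib_left sum_distrib_right power_mult_distrib power_add algebra_simps)
  have "((\<lambda>t. \<Sum>j<n. \<Sum>i<n. (b i * cnj (b j) * of_real r ^ (i + j)) * (ce t ^ i * cnj (ce t) ^ j))
     has_integral (\<Sum>j<n. \<Sum>i<n. (b i * cnj (b j) * of_real r ^ (i + j)) * (if i = j then 1 else 0))) {0..1}"
    by (intro has_integral_sum finite_lessThan has_integral_mult_right ortho)
  also have "(\<Sum>j<n. \<Sum>i<n. (b i * cnj (b j) * of_real r ^ (i + j)) * (if i = j then 1 else 0))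
     = (\<Sum>i<n. b i * cnj (b i) * of_real r ^ (2 * i))"
    by (simp add: if_distrib[where f="\<lambda>x. _ * x"] sum.delta mult_2 cong: if_cong)
  also have "\<dots> = of_real (\<Sum>i<n. (cmod (b i))\<^sup>2 * r ^ (2 * i))"
  proof -
    have "b i * cnj (b i) = of_real ((cmod (b i))\<^sup>2)" for i
      by (rule complex_norm_square[symmetric])
    then show ?thesis by (simp only: of_real_sum of_real_mult of_real_power)
  qed
  finally show ?thesis unfolding eq .
qed

lemma parseval:
  assumes hol: "g holomorphic_on ball 0 R" and r: "0 \<le> r" "r < R"
  shows "(\<lambda>n. (cmod (taylor_coeff g n))\<^sup>2 * r ^ (2 * n)) sums
           integral {0..1} (\<lambda>t. (cmod (g (of_real r * ce t)))\<^sup>2)"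
proof -
  define b where "b = taylor_coeff g"
  have ps: "\<And>w. cmod w < R \<Longrightarrow> (\<lambda>n. b n * w ^ n) sums g w"
    unfolding b_def by (rule taylor_sums[OF hol])
  have "conv_radius b \<ge> ereal R"
  proof (rule conv_radius_geI_ex')
    fix r' :: real assume "0 < r'" "ereal r' < ereal R"
    then show "summable (\<lambda>n. b n * of_real r' ^ n)"
      using ps[of "of_real r'"] by (auto simp: sums_iff)
  qed
  then have cr: "ereal r < conv_radius b" using r by (intro less_le_trans[OF _ \<open>conv_radius b \<ge> ereal R\<close>]) simp
  have ul0: "uniform_limit (cball 0 r) (\<lambda>n x. \<Sum>i<n. b i * (x - 0) ^ i)
       (\<lambda>x. suminf (\<lambda>i. b i * (x - 0) ^ i)) sequentially"
    by (rule powser_uniform_limit[OF cr])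
  have ul1: "uniform_limit {0..1} (\<lambda>n t. \<Sum>i<n. b i * (of_real r * ce t) ^ i)
       (\<lambda>t. g (of_real r * ce t)) sequentially"
  proof -
    have "uniform_limit {0..1} (\<lambda>n t. \<Sum>i<n. b i * (of_real r * ce t - 0) ^ i)
       (\<lambda>t. suminf (\<lambda>i. b i * (of_real r * ce t - 0) ^ i)) sequentially"
      by (rule uniform_limit_compose'[OF ul0]) (use r in \<open>auto simp: norm_mult\<close>)
    moreover have "suminf (\<lambda>i. b i * (of_real r * ce t - 0) ^ i) = g (of_real r * ce t)" for t
      using ps[of "of_real r * ce t"] r by (simp add: sums_iff norm_mult)
    ultimately show ?thesis by simp
  qed
  have contg: "continuous_on {0..1} (\<lambda>t. g (of_real r * ce t))"
  proof -
    have "continuous_on (ball 0 R) g" using hol holomorphic_on_imp_continuous_on by blast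
    then show ?thesis
      by (rule continuous_on_compose2) (use r in \<open>auto intro!: continuous_intros simp: norm_mult\<close>)
  qed
  have bd1: "bounded ((\<lambda>t. g (of_real r * ce t)) ` {0..1})"
    by (intro compact_imp_bounded compact_continuous_image contg) simp
  have bd2: "bounded ((\<lambda>t. cnj (g (of_real r * ce t))) ` {0..1})"
    by (intro compact_imp_bounded compact_continuous_image continuous_intros contg) simp
  have ul2: "uniform_limit {0..1}
     (\<lambda>n t. (\<Sum>i<n. b i * (of_real r * ce t) ^ i) * cnj (\<Sum>i<n. b i * (of_real r * ce t) ^ i))
     (\<lambda>t. g (of_real r * ce t) * cnj (g (of_real r * ce t))) sequentially"
    by (rule uniform_lim_mult[OF ul1 uniform_limit_cnj[OF ul1] bd1 bd2])
  obtain I J where I: "\<And>n. ((\<lambda>t. (\<Sum>i<n. b i * (of_real r * ce t) ^ i) * cnj (\<Sum>i<n. b i * (of_real r * ce t) ^ i)) has_integral I n) {0..1}"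
    and J: "((\<lambda>t. g (of_real r * ce t) * cnj (g (of_real r * ce t))) has_integral J) {0..1}"
    and lim: "(I \<longlongrightarrow> J) sequentially"
    by (rule uniform_limit_integral[OF ul2]) (auto intro!: continuous_intros)
  have In: "I n = of_real (\<Sum>i<n. (cmod (b i))\<^sup>2 * r ^ (2 * i))" for n
    using has_integral_unique[OF I partial_integral] .
  have "((\<lambda>t. Re (g (of_real r * ce t) * cnj (g (of_real r * ce t)))) has_integral Re J) {0..1}"
    by (rule has_integral_Re[OF J])
  then have "((\<lambda>t. (cmod (g (of_real r * ce t)))\<^sup>2) has_integral Re J) {0..1}"
    by (simp add: complex_norm_square[symmetric] del: complex_mult_cnj)
  then have intJ: "integral {0..1} (\<lambda>t. (cmod (g (of_real r * ce t)))\<^sup>2) = Re J"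
    by (rule integral_unique)
  have "(\<lambda>n. Re (I n)) \<longlonglongrightarrow> Re J" by (intro tendsto_intros lim)
  then show ?thesis unfolding sums_def intJ b_def[symmetric] using In by simp
qed



lemma contour_to_integral:
  assumes "(f has_contour_integral I) (circlepath 0 r)"
  shows "((\<lambda>t. f (of_real r * ce t) * (2 * of_real pi * \<i> * (of_real r * ce t))) has_integral I) {0..1}"
proof -
  have "((\<lambda>x. f (circlepath 0 r x) * vector_derivative (circlepath 0 r) (at x within {0..1})) has_integral I) {0..1}"
    using assms unfolding has_contour_integral_def .
  then show ?thesis
  proof (rule has_integral_eq[rotated])
    fix x :: real assume "x \<in> {0..1}"
    then have "vector_derivative (circlepath 0 r) (at x within {0..1}) = 2 * pi * \<i> * r * ce x"
      by (simp add: vector_derivative_circlepath01 ce_def)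
    moreover have "circlepath 0 r x = of_real r * ce x" by (simp add: circlepath ce_def)
    ultimately show "f (circlepath 0 r x) * vector_derivative (circlepath 0 r) (at x within {0..1}) =
      f (of_real r * ce x) * (2 * of_real pi * \<i> * (of_real r * ce x))"
      by (simp add: algebra_simps)
  qed
qed

lemma mean_value:
  assumes hol: "H holomorphic_on ball 0 R" and r: "0 \<le> r" "r < R"
  shows "((\<lambda>s. H (of_real r * ce s)) has_integral H 0) {0..1}"
proof (cases "r = 0")
  case True
  then show ?thesis using has_integral_const_real[of "H 0" 0 1] by simp
next
  case False
  then have r0: "r > 0" using r by simp
  have "((\<lambda>u. H u / (u - 0)) has_contour_integral (2 * of_real pi * \<i> * H 0)) (circlepath 0 r)"
  proof (rule Cauchy_integral_circlepath)
    have "cball 0 r \<subseteq> ball 0 R" using r by auto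
    then show "continuous_on (cball 0 r) H"
      using holomorphic_on_imp_continuous_on holomorphic_on_subset[OF hol] by blast
    show "H holomorphic_on ball 0 r"
      by (rule holomorphic_on_subset[OF hol]) (use r in auto)
  qed (use r0 in simp)
  from contour_to_integral[OF this]
  have "((\<lambda>t. 2 * of_real pi * \<i> * H (of_real r * ce t)) has_integral (2 * of_real pi * \<i> * H 0)) {0..1}"
  proof (rule has_integral_eq[rotated])
    fix t
    have "of_real r * ce t \<noteq> 0" using r0 by simp
    then show "H (of_real r * ce t) / (of_real r * ce t - 0) * (2 * of_real pi * \<i> * (of_real r * ce t)) =
        2 * of_real pi * \<i> * H (of_real r * ce t)" by simp
  qed
  from has_integral_mult_right[OF this, of "1 / (2 * of_real pi * \<i>)"]
  show ?thesis by simp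
qed

definition pk :: "complex \<Rightarrow> complex \<Rightarrow> real" where
  "pk w z = (1 - (cmod w)\<^sup>2) / (cmod (z - w))\<^sup>2"

lemma pk_kernel:
  assumes z: "cmod z = 1" and w: "cmod w < 1"
  shows "z / (z - w) + cnj w * z / (1 - cnj w * z) = of_real (pk w z)"
proof -
  have zw: "z - w \<noteq> 0" using z w by auto
  have zc: "z * cnj z = 1" using z by (simp add: complex_norm_square[symmetric])
  have e1: "1 - cnj w * z = z * cnj (z - w)" using zc by (simp add: algebra_simps)
  have zne: "z \<noteq> 0" using z by auto
  have cz: "cnj (z - w) \<noteq> 0" using zw by simp
  have "cnj w * z / (1 - cnj w * z) = cnj w / cnj (z - w)"
    unfolding e1 using zne cz by (simp add: field_simps)
  then have "z / (z - w) + cnj w * z / (1 - cnj w * z) = z / (z - w) + cnj w / cnj (z - w)"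
    by simp
  also have "\<dots> = (z * cnj (z - w) + cnj w * (z - w)) / ((z - w) * cnj (z - w))"
    using zw cz by (simp add: field_simps)
  also have "z * cnj (z - w) + cnj w * (z - w) = 1 - w * cnj w"
    using zc by (simp add: algebra_simps)
  also have "(z - w) * cnj (z - w) = of_real ((cmod (z - w))\<^sup>2)"
    by (rule complex_norm_square[symmetric])
  also have "1 - w * cnj w = of_real (1 - (cmod w)\<^sup>2)"
    by (simp only: of_real_diff of_real_1 complex_norm_square)
  finally show ?thesis by (simp add: pk_def)
qed

lemma poisson:
  assumes hol: "g holomorphic_on ball 0 R" and R: "1 < R" and w: "cmod w < 1"
  shows "((\<lambda>t. g (ce t) * of_real (pk w (ce t))) has_integral g w) {0..1}"
proof -
  have h1: "((\<lambda>u. g u / (u - w)) has_contour_integral (2 * of_real pi * \<i> * g w)) (circlepath 0 1)"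
  proof (rule Cauchy_integral_circlepath)
    have "cball 0 1 \<subseteq> ball 0 R" using R by auto
    then show "continuous_on (cball 0 1) g"
      using holomorphic_on_imp_continuous_on holomorphic_on_subset[OF hol] by blast
    show "g holomorphic_on ball 0 1"
      by (rule holomorphic_on_subset[OF hol]) (use R in auto)
  qed (use w in simp)
  define R2 where "R2 = min R (2 / (1 + cmod w))"
  have p: "0 < 1 + cmod w" by (simp add: add_pos_nonneg)
  have "1 < 2 / (1 + cmod w)" using w p by (simp add: less_divide_eq)
  then have R2: "1 < R2" using R by (auto simp: R2_def)
  have h2: "((\<lambda>u. g u * (cnj w / (1 - cnj w * u))) has_contour_integral 0) (circlepath 0 1)"
  proof (rule Cauchy_theorem_disc_simple[of _ 0 R2])
    have nz: "1 - cnj w * u \<noteq> 0" if "u \<in> ball 0 R2" for u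
    proof -
      have "cmod u < 2 / (1 + cmod w)" using that by (simp add: R2_def)
      then have "cmod w * cmod u \<le> cmod w * (2 / (1 + cmod w))"
        by (intro mult_left_mono) auto
      also have "\<dots> < 1" using w p by (simp add: divide_less_eq)
      finally have "cmod (cnj w * u) < 1" by (simp add: norm_mult)
      then show ?thesis by auto
    qed
    have "g holomorphic_on ball 0 R2"
      using hol by (rule holomorphic_on_subset) (auto simp: R2_def)
    then show "(\<lambda>u. g u * (cnj w / (1 - cnj w * u))) holomorphic_on ball 0 R2"
      using nz by (intro holomorphic_intros) auto
    show "path_image (circlepath 0 1) \<subseteq> ball 0 R2" using R2 by auto
  qed auto
  note i1 = contour_to_integral[OF h1]
  note i2 = contour_to_integral[OF h2]
  have alg: "(a::complex) / b * (k * z) + a * (d / e) * (k * z) = k * (a * (z / b + d * z / e))" for a b k z d e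
    by (simp add: algebra_simps)
  from has_integral_add[OF i1 i2]
  have "((\<lambda>t. 2 * of_real pi * \<i> * (g (ce t) * of_real (pk w (ce t)))) has_integral (2 * of_real pi * \<i> * g w + 0)) {0..1}"
  proof (rule has_integral_eq[rotated])
    fix t
    show "g (of_real 1 * ce t) / (of_real 1 * ce t - w) * (2 * of_real pi * \<i> * (of_real 1 * ce t)) +
          g (of_real 1 * ce t) * (cnj w / (1 - cnj w * (of_real 1 * ce t))) * (2 * of_real pi * \<i> * (of_real 1 * ce t)) =
          2 * of_real pi * \<i> * (g (ce t) * of_real (pk w (ce t)))"
      unfolding of_real_1 mult_1_left alg pk_kernel[OF norm_ce w, of t] ..
  qed
  from has_integral_mult_right[OF this, of "1 / (2 * of_real pi * \<i>)"]
  show ?thesis by simp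
qed



lemma pk_nonneg: "cmod w < 1 \<Longrightarrow> 0 \<le> pk w z"
  unfolding pk_def by (intro divide_nonneg_nonneg) (auto simp: abs_square_less_1 power_le_one)

lemma Re_pk:
  assumes "cmod z = 1"
  shows "Re ((z + w) / (z - w)) = pk w z"
proof -
  have z: "(Re z)\<^sup>2 + (Im z)\<^sup>2 = 1" using assms by (simp add: cmod_def)
  have "Re ((z + w) / (z - w)) = ((Re z + Re w) * (Re z - Re w) + (Im z + Im w) * (Im z - Im w)) / (cmod (z - w))\<^sup>2"
    by (simp add: Re_divide cmod_power2)
  also have "(Re z + Re w) * (Re z - Re w) + (Im z + Im w) * (Im z - Im w) = 1 - (cmod w)\<^sup>2"
    using z cmod_power2[of w] by (simp add: algebra_simps power2_eq_square)
  finally show ?thesis by (simp add: pk_def)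
qed

lemma cont_ce_comp:
  assumes "continuous_on S g" "\<And>t. ce t \<in> S"
  shows "continuous_on A (\<lambda>t. g (ce t))"
proof -
  have "ce ` A \<subseteq> S" using assms(2) by auto
  then show ?thesis using continuous_on_compose2[OF assms(1) continuous_on_ce] by blast
qed

lemma poisson_ineq:
  assumes hol: "g holomorphic_on ball 0 R" and R: "1 < R" and w: "cmod w < 1"
  shows "(cmod (g w))\<^sup>2 \<le> integral {0..1} (\<lambda>t. (cmod (g (ce t)))\<^sup>2 * pk w (ce t))"
proof -
  define P where "P t = pk w (ce t)" for t
  define c where "c = g w"
  have Pn: "0 \<le> P t" for t unfolding P_def using w by (rule pk_nonneg)
  have A: "((\<lambda>t. g (ce t) * of_real (P t)) has_integral c) {0..1}"
    unfolding P_def c_def by (rule poisson[OF hol R w])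
  have B: "((\<lambda>t. of_real (P t)) has_integral (1::complex)) {0..1}"
    using poisson[of "\<lambda>_. 1" R w] R w unfolding P_def by simp
  have contg: "continuous_on {0..1} (\<lambda>t. g (ce t))"
  proof (rule cont_ce_comp)
    show "continuous_on (ball 0 R) g" using hol by (rule holomorphic_on_imp_continuous_on)
  qed (use R in auto)
  have nw: "ce t \<noteq> w" for t using w norm_ce[of t] by auto
  have contP: "continuous_on {0..1} P"
    unfolding P_def pk_def by (intro continuous_intros) (auto simp: nw)
  have "(\<lambda>t. (cmod (g (ce t)))\<^sup>2 * P t) integrable_on {0..1}"
    by (intro integrable_continuous_interval continuous_intros contg contP)
  then obtain Q where Q: "((\<lambda>t. (cmod (g (ce t)))\<^sup>2 * P t) has_integral Q) {0..1}"
    by blast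
  have QC: "((\<lambda>t. of_real ((cmod (g (ce t)))\<^sup>2 * P t)) has_integral (of_real Q :: complex)) {0..1}"
    by (rule has_integral_of_real[OF Q])
  have A': "((\<lambda>t. cnj (g (ce t) * of_real (P t))) has_integral cnj c) {0..1}"
    using has_integral_cnj[of "\<lambda>t. g (ce t) * of_real (P t)" c "{0..1}"] A by (simp add: o_def)
  have "((\<lambda>t. of_real ((cmod (g (ce t)))\<^sup>2 * P t) - cnj c * (g (ce t) * of_real (P t))
       - c * cnj (g (ce t) * of_real (P t)) + c * cnj c * of_real (P t))
       has_integral (of_real Q - cnj c * c - c * cnj c + c * cnj c * 1)) {0..1}"
    by (intro has_integral_add has_integral_diff has_integral_mult_right QC A A' B)
  moreover have "of_real Q - cnj c * c - c * cnj c + c * cnj c * 1 = (of_real (Q - (cmod c)\<^sup>2) :: complex)"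
  proof -
    have "of_real Q - cnj c * c - c * cnj c + c * cnj c * 1 = of_real Q - c * cnj c"
      by (simp add: algebra_simps)
    also have "c * cnj c = of_real ((cmod c)\<^sup>2)" by (rule complex_norm_square[symmetric])
    finally show ?thesis by simp
  qed
  ultimately have "((\<lambda>t. of_real ((cmod (g (ce t)))\<^sup>2 * P t) - cnj c * (g (ce t) * of_real (P t))
       - c * cnj (g (ce t) * of_real (P t)) + c * cnj c * of_real (P t))
       has_integral (of_real (Q - (cmod c)\<^sup>2) :: complex)) {0..1}" by simp
  then have "((\<lambda>t. of_real ((cmod (g (ce t) - c))\<^sup>2 * P t)) has_integral (of_real (Q - (cmod c)\<^sup>2) :: complex)) {0..1}"
  proof (rule has_integral_eq[rotated])
    fix t
    define x where "x = g (ce t)"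
    have "of_real ((cmod x)\<^sup>2 * P t) - cnj c * (x * of_real (P t))
       - c * cnj (x * of_real (P t)) + c * cnj c * of_real (P t)
       = (x * cnj x - cnj c * x - c * cnj x + c * cnj c) * of_real (P t)"
      by (simp only: of_real_mult complex_norm_square complex_cnj_mult complex_cnj_complex_of_real) (simp add: algebra_simps)
    also have "x * cnj x - cnj c * x - c * cnj x + c * cnj c = (x - c) * cnj (x - c)"
      by (simp add: algebra_simps)
    also have "\<dots> = of_real ((cmod (x - c))\<^sup>2)" by (rule complex_norm_square[symmetric])
    finally show "of_real ((cmod (g (ce t)))\<^sup>2 * P t) - cnj c * (g (ce t) * of_real (P t))
       - c * cnj (g (ce t) * of_real (P t)) + c * cnj c * of_real (P t) = of_real ((cmod (g (ce t) - c))\<^sup>2 * P t)"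
      unfolding x_def by simp
  qed
  from has_integral_Re[OF this]
  have "((\<lambda>t. (cmod (g (ce t) - c))\<^sup>2 * P t) has_integral (Q - (cmod c)\<^sup>2)) {0..1}" by simp
  then have "0 \<le> Q - (cmod c)\<^sup>2"
    by (rule has_integral_nonneg) (use Pn in auto)
  then show ?thesis using integral_unique[OF Q] unfolding c_def P_def by simp
qed

lemma mean_pk:
  assumes hol: "\<psi> holomorphic_on ball 0 R" and into: "\<And>z. z \<in> ball 0 R \<Longrightarrow> cmod (\<psi> z) < 1"
    and r: "0 \<le> r" "r < R" and z: "cmod z = 1"
  shows "((\<lambda>s. pk (\<psi> (of_real r * ce s)) z) has_integral pk (\<psi> 0) z) {0..1}"
proof -
  have nz: "z - \<psi> u \<noteq> 0" if "u \<in> ball 0 R" for u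
    using into[OF that] z by auto
  have "(\<lambda>u. (z + \<psi> u) / (z - \<psi> u)) holomorphic_on ball 0 R"
    using nz by (intro holomorphic_intros hol) auto
  from has_integral_Re[OF mean_value[OF this r]]
  show ?thesis by (simp add: Re_pk[OF z])
qed



lemma subord_bound:
  assumes g: "g holomorphic_on ball 0 R1" "1 < R1"
    and psi: "\<psi> holomorphic_on ball 0 R" "\<And>z. z \<in> ball 0 R \<Longrightarrow> cmod (\<psi> z) < 1"
    and r: "0 \<le> r" "r < R"
  shows "integral {0..1} (\<lambda>s. (cmod (g (\<psi> (of_real r * ce s))))\<^sup>2)
       \<le> integral {0..1} (\<lambda>t. (cmod (g (ce t)))\<^sup>2 * pk (\<psi> 0) (ce t))"
proof -
  define W where "W s = \<psi> (of_real r * ce s)" for s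
  have inb: "of_real r * ce s \<in> ball 0 R" for s using r by (simp add: norm_mult)
  have W1: "cmod (W s) < 1" for s unfolding W_def by (rule psi(2)[OF inb])
  have contW: "continuous_on UNIV W"
  proof -
    have "continuous_on (ball 0 R) \<psi>" using psi(1) by (rule holomorphic_on_imp_continuous_on)
    moreover have "continuous_on UNIV (\<lambda>s. of_real r * ce s)" by (intro continuous_intros)
    moreover have "(\<lambda>s. of_real r * ce s) ` UNIV \<subseteq> ball 0 R" using inb by auto
    ultimately show ?thesis unfolding W_def using continuous_on_compose2 by blast
  qed
  have contG: "continuous_on UNIV (\<lambda>t. g (ce t))"
  proof (rule cont_ce_comp)
    show "continuous_on (ball 0 R1) g" using g(1) by (rule holomorphic_on_imp_continuous_on)
  qed (use g(2) in auto)
  define F where "F s t = (cmod (g (ce t)))\<^sup>2 * pk (W s) (ce t)" for s t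
  have nz: "ce t \<noteq> W s" for s t using W1[of s] by (metis norm_ce less_irrefl)
  have cW2: "continuous_on UNIV (\<lambda>p::real\<times>real. W (fst p))"
    using continuous_on_compose2[OF contW continuous_on_fst[OF continuous_on_id]] by auto
  have cG2: "continuous_on UNIV (\<lambda>p::real\<times>real. g (ce (snd p)))"
    using continuous_on_compose2[OF contG continuous_on_snd[OF continuous_on_id]] by auto
  have cc2: "continuous_on UNIV (\<lambda>p::real\<times>real. ce (snd p))"
    using continuous_on_compose2[OF continuous_on_ce[of UNIV] continuous_on_snd[OF continuous_on_id]] by auto
  have contF: "continuous_on UNIV (\<lambda>p::real\<times>real. F (fst p) (snd p))"
    unfolding F_def pk_def
    by (intro continuous_intros cW2 cG2 cc2) (use nz in auto)
  have contF': "continuous_on (cbox (0,0) (1,1)) (\<lambda>(s, t). F s t)"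
    using continuous_on_subset[OF contF] by (simp add: case_prod_beta')
  have step1: "(cmod (g (W s)))\<^sup>2 \<le> integral {0..1} (F s)" for s
    unfolding F_def by (rule poisson_ineq[OF g W1])
  have int1: "(\<lambda>s. (cmod (g (W s)))\<^sup>2) integrable_on {0..1}"
  proof -
    have "continuous_on UNIV (\<lambda>s. g (W s))"
    proof -
      have "continuous_on (ball 0 R1) g" using g(1) by (rule holomorphic_on_imp_continuous_on)
      moreover have "W ` UNIV \<subseteq> ball 0 R1" using W1 g(2) by (auto intro: less_trans[OF W1])
      ultimately show ?thesis using continuous_on_compose2[OF _ contW] by blast
    qed
    then show ?thesis
      by (intro integrable_continuous_interval continuous_intros) (auto intro: continuous_on_subset)
  qed
  have int2: "(\<lambda>s. integral {0..1} (F s)) integrable_on {0..1}"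
  proof -
    have "continuous_on ({0..1} \<times> cbox 0 1) (\<lambda>(s, t). F s t)"
      using continuous_on_subset[OF contF] by (simp add: case_prod_beta')
    from integral_continuous_on_param[OF this]
    have "continuous_on {0..1} (\<lambda>s. integral (cbox 0 1) (F s))" .
    then show ?thesis by (simp add: integrable_continuous_interval)
  qed
  have "integral {0..1} (\<lambda>s. (cmod (g (W s)))\<^sup>2) \<le> integral {0..1} (\<lambda>s. integral {0..1} (F s))"
    by (rule integral_le[OF int1 int2 step1])
  also have "\<dots> = integral {0..1} (\<lambda>t. integral {0..1} (\<lambda>s. F s t))"
    using integral_swap_continuous[OF contF'] by simp
  also have "\<dots> = integral {0..1} (\<lambda>t. (cmod (g (ce t)))\<^sup>2 * pk (\<psi> 0) (ce t))"
  proof (rule integral_cong)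
    fix t :: real
    have "integral {0..1} (\<lambda>s. pk (W s) (ce t)) = pk (\<psi> 0) (ce t)"
      unfolding W_def by (rule integral_unique[OF mean_pk[OF psi r norm_ce]])
    then show "integral {0..1} (\<lambda>s. F s t) = (cmod (g (ce t)))\<^sup>2 * pk (\<psi> 0) (ce t)"
      unfolding F_def by simp
  qed
  finally show ?thesis unfolding W_def .
qed



definition mean :: "(complex \<Rightarrow> complex) \<Rightarrow> real \<Rightarrow> real" where
  "mean g r = integral {0..1} (\<lambda>t. (cmod (g (of_real r * ce t)))\<^sup>2)"

lemma mean_sums:
  assumes "g holomorphic_on ball 0 1" "0 \<le> r" "r < 1"
  shows "(\<lambda>n. (cmod (taylor_coeff g n))\<^sup>2 * r ^ (2 * n)) sums mean g r"
  unfolding mean_def by (rule parseval[OF assms])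

lemma mean_le_norm:
  assumes "g holomorphic_on ball 0 1" "summable (\<lambda>n. (cmod (taylor_coeff g n))\<^sup>2)" "0 \<le> r" "r < 1"
  shows "mean g r \<le> (\<Sum>n. (cmod (taylor_coeff g n))\<^sup>2)"
proof (rule sums_le[OF _ mean_sums[OF assms(1,3,4)] summable_sums[OF assms(2)]])
  fix n
  have "r ^ (2 * n) \<le> 1" using assms(3,4) by (simp add: power_le_one)
  then show "(cmod (taylor_coeff g n))\<^sup>2 * r ^ (2 * n) \<le> (cmod (taylor_coeff g n))\<^sup>2"
    by (simp add: mult_left_le)
qed

lemma mean_mono:
  assumes "g holomorphic_on ball 0 1" "0 \<le> r1" "r1 \<le> r2" "r2 < 1"
  shows "mean g r1 \<le> mean g r2"
proof (rule sums_le[OF _ mean_sums[OF assms(1,2)] mean_sums[OF assms(1)]])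
  fix n
  have "r1 ^ (2 * n) \<le> r2 ^ (2 * n)" using assms by (simp add: power_mono)
  then show "(cmod (taylor_coeff g n))\<^sup>2 * r1 ^ (2 * n) \<le> (cmod (taylor_coeff g n))\<^sup>2 * r2 ^ (2 * n)"
    by (simp add: mult_left_mono)
qed (use assms in auto)

lemma mean_pos:
  assumes hol: "g holomorphic_on ball 0 1" and z1: "cmod z1 < 1" "g z1 \<noteq> 0" and r: "0 < r" "r < 1"
  shows "0 < mean g r"
proof -
  have "\<exists>n. taylor_coeff g n \<noteq> 0"
  proof (rule ccontr)
    assume "\<not> ?thesis"
    then have "(\<lambda>n. taylor_coeff g n * z1 ^ n) = (\<lambda>n. 0)" by auto
    with taylor_sums[OF hol z1(1)] have "(\<lambda>n. 0) sums g z1" by simp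
    then have "g z1 = 0" using sums_unique sums_zero by (metis sums_unique2)
    with z1 show False by simp
  qed
  then obtain n where n: "taylor_coeff g n \<noteq> 0" by blast
  note S = mean_sums[OF hol less_imp_le[OF r(1)] r(2)]
  show ?thesis
    unfolding sums_unique[OF S]
  proof (rule suminf_pos2)
    show "summable (\<lambda>n. (cmod (taylor_coeff g n))\<^sup>2 * r ^ (2 * n))" using S by (rule sums_summable)
    show "0 < (cmod (taylor_coeff g n))\<^sup>2 * r ^ (2 * n)" using n r by simp
  qed simp
qed

lemma h2_bound:
  fixes x :: "nat \<Rightarrow> real"
  assumes nn: "\<And>n. 0 \<le> x n"
    and S: "\<And>r. 0 \<le> r \<Longrightarrow> r < 1 \<Longrightarrow> (\<lambda>n. x n * r ^ (2 * n)) sums m r"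
    and B: "\<And>r. 0 \<le> r \<Longrightarrow> r < 1 \<Longrightarrow> m r \<le> B"
  shows "summable x \<and> suminf x \<le> B"
proof -
  have part: "(\<Sum>n<k. x n) \<le> B" for k
  proof -
    have ev: "eventually (\<lambda>r. (\<Sum>n<k. x n * r ^ (2 * n)) \<le> B) (at_left (1::real))"
    proof -
      have "eventually (\<lambda>r. r \<in> {0<..<1}) (at_left (1::real))" by (rule eventually_at_left_real) simp
      then show ?thesis
      proof eventually_elim
        case (elim r)
        then have r: "0 \<le> r" "r < 1" by auto
        have "(\<Sum>n<k. x n * r ^ (2 * n)) \<le> (\<Sum>n. x n * r ^ (2 * n))"
          by (rule sum_le_suminf) (use S[OF r] nn in \<open>auto simp: sums_iff\<close>)
        also have "\<dots> = m r" using S[OF r] by (simp add: sums_iff)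
        finally show ?case using B[OF r] by simp
      qed
    qed
    have lim: "((\<lambda>r. (\<Sum>n<k. x n * r ^ (2 * n))) \<longlongrightarrow> (\<Sum>n<k. x n * 1 ^ (2 * n))) (at_left (1::real))"
      by (intro tendsto_intros)
    have "(\<Sum>n<k. x n * 1 ^ (2 * n)) \<le> B"
      by (rule tendsto_le[OF trivial_limit_at_left_real tendsto_const lim ev])
    then show ?thesis by simp
  qed
  have sx: "summable x" by (rule summableI_nonneg_bounded[OF nn part])
  moreover have "suminf x \<le> B" by (rule suminf_le_const[OF sx part])
  ultimately show ?thesis by simp
qed

lemma pk_bound:
  assumes q: "0 < q" "q < 1" and z0: "cmod z0 = 1" and z: "cmod z = 1"
  shows "pk (of_real q * z0) z \<le> (1 + q) / (1 - q) - (1 + q) / (1 - q) * q * (cmod (z - z0))\<^sup>2 / 4"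
proof -
  define D where "D = (cmod (z - of_real q * z0))\<^sup>2"
  define E where "E = (cmod (z - z0))\<^sup>2"
  have id: "D - q * E = (1 - q) * (cmod z)\<^sup>2 + (q\<^sup>2 - q) * (cmod z0)\<^sup>2"
    unfolding D_def E_def cmod_power2 by (simp add: algebra_simps power2_eq_square)
  then have DE: "D = (1 - q)\<^sup>2 + q * E" using z z0 by (simp add: algebra_simps power2_eq_square)
  have Dpos: "0 < D"
  proof -
    have "z \<noteq> of_real q * z0" using q z z0 by (auto simp: norm_mult)
    then show ?thesis unfolding D_def by simp
  qed
  have "sqrt D \<le> 2"
  proof -
    have "cmod (z - of_real q * z0) \<le> cmod z + cmod (of_real q * z0)" by (rule norm_triangle_ineq4)
    also have "\<dots> \<le> 2" using q z z0 by (simp add: norm_mult)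
    finally show ?thesis unfolding D_def by simp
  qed
  then have D4: "D \<le> 4" using Dpos by (metis real_sqrt_le_iff real_sqrt_four)
  have E0: "0 \<le> E" unfolding E_def by simp
  have pkD: "pk (of_real q * z0) z = (1 - q\<^sup>2) / D"
    unfolding pk_def D_def using q z0 by (simp add: norm_mult)
  have "(1 - q)\<^sup>2 \<le> D * (1 - q * E / 4)"
  proof -
    have "0 \<le> q * E" using E0 q by simp
    then have "(q * E) * D \<le> (q * E) * 4" using mult_left_mono[OF D4] by blast
    then have "q * E * D / 4 \<le> q * E" by simp
    then show ?thesis using DE by (simp add: algebra_simps)
  qed
  then have "(1 - q)\<^sup>2 / D \<le> 1 - q * E / 4" using Dpos by (simp add: divide_le_eq mult.commute)
  then have "(1 + q) / (1 - q) * ((1 - q)\<^sup>2 / D) \<le> (1 + q) / (1 - q) * (1 - q * E / 4)"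
    using q by (intro mult_left_mono) auto
  moreover have "(1 + q) / (1 - q) * ((1 - q)\<^sup>2 / D) = (1 - q\<^sup>2) / D"
    using q Dpos by (simp add: power2_eq_square field_simps)
  ultimately show ?thesis unfolding pkD E_def by (simp add: algebra_simps)
qed

lemma higher_deriv_zero: "(deriv ^^ n) (\<lambda>_. (0::complex)) = (\<lambda>_. 0)"
  by (induction n) auto

lemma taylor_coeff_zero:
  assumes "\<And>z. z \<in> ball 0 1 \<Longrightarrow> g z = 0"
  shows "taylor_coeff g n = 0"
proof -
  have "eventually (\<lambda>z. g z = 0) (nhds 0)"
    using eventually_nhds_in_open[of "ball 0 1" 0] assms by (auto elim!: eventually_mono)
  then have "(deriv ^^ n) g 0 = (deriv ^^ n) (\<lambda>_. 0) 0" by (rule higher_deriv_cong_ev) simp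
  then show ?thesis by (simp add: taylor_coeff_def higher_deriv_zero)
qed



lemma cq_mono:
  fixes s q :: real assumes "0 \<le> s" "s \<le> q" "q < 1"
  shows "(1 + s) / (1 - s) \<le> (1 + q) / (1 - q)"
proof -
  have "(1 + s) * (1 - q) \<le> (1 + q) * (1 - s)" using assms by (simp add: algebra_simps)
  then show ?thesis using assms by (simp add: divide_simps)
qed

lemma cont_on_circle:
  assumes "g holomorphic_on ball 0 1" "0 \<le> r" "r < 1"
  shows "continuous_on A (\<lambda>t. g (of_real r * ce t))"
proof -
  have "continuous_on (ball 0 1) g" using assms(1) by (rule holomorphic_on_imp_continuous_on)
  moreover have "continuous_on A (\<lambda>t. of_real r * ce t)" by (intro continuous_intros)
  moreover have "(\<lambda>t. of_real r * ce t) ` A \<subseteq> ball 0 1" using assms by (auto simp: norm_mult)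
  ultimately show ?thesis using continuous_on_compose2 by blast
qed

lemma main_ineq:
  assumes hol: "\<phi> holomorphic_on ball 0 1" and into: "\<phi> ` ball 0 1 \<subseteq> ball 0 1"
    and a0: "\<phi> 0 \<noteq> 0"
    and hf: "f holomorphic_on ball 0 1" and sf: "summable (\<lambda>n. (cmod (taylor_coeff f n))\<^sup>2)"
    and z1: "z1 \<in> ball 0 1" "f z1 \<noteq> 0"
  shows "H2_norm (f \<circ> \<phi>) < sqrt ((1 + cmod (\<phi> 0)) / (1 - cmod (\<phi> 0))) * H2_norm f"
proof -
  define a where "a = \<phi> 0"
  define s where "s = cmod a"
  define c where "c = (1 + s) / (1 - s)"
  define N where "N = (\<Sum>n. (cmod (taylor_coeff f n))\<^sup>2)"
  have "\<phi> 0 \<in> ball 0 1" by (rule subsetD[OF into]) simp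
  then have s: "0 < s" "s < 1" using a0 by (auto simp: s_def a_def)
  have c0: "0 < c" using s by (simp add: c_def)
  have N0: "0 \<le> N" unfolding N_def by (intro suminf_nonneg sf) simp
  define z0 where "z0 = a / of_real s"
  have z0: "cmod z0 = 1" using s by (simp add: z0_def s_def norm_divide)
  define G where "G z = f z * (z - z0)" for z
  have holG: "G holomorphic_on ball 0 1" unfolding G_def by (intro holomorphic_intros hf)
  have Gz1: "G z1 \<noteq> 0"
  proof -
    have "z1 \<noteq> z0" using z1 z0 by auto
    then show ?thesis using z1 by (simp add: G_def)
  qed
  define m0 where "m0 = mean G (1/2)"
  have m0: "0 < m0" unfolding m0_def by (rule mean_pos[OF holG _ Gz1]) (use z1 in auto)
  define J where "J \<rho> = integral {0..1} (\<lambda>t. (cmod (f (of_real \<rho> * ce t)))\<^sup>2 * (cmod (ce t - z0))\<^sup>2)" for \<rho>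
  have Jlow: "m0 / 2 - (1 - \<rho>)\<^sup>2 * N \<le> J \<rho>" if \<rho>: "1/2 \<le> \<rho>" "\<rho> < 1" for \<rho>
  proof -
    define u where "u t = (cmod (f (of_real \<rho> * ce t)))\<^sup>2" for t
    have cf: "continuous_on {0..1} (\<lambda>t. f (of_real \<rho> * ce t))"
      by (rule cont_on_circle[OF hf]) (use \<rho> in auto)
    have iu: "u integrable_on {0..1}" unfolding u_def
      by (intro integrable_continuous_interval continuous_intros cf)
    have iJ: "(\<lambda>t. u t * (cmod (ce t - z0))\<^sup>2) integrable_on {0..1}" unfolding u_def
      by (intro integrable_continuous_interval continuous_intros cf)
    have iG: "(\<lambda>t. u t * (cmod (of_real \<rho> * ce t - z0))\<^sup>2) integrable_on {0..1}" unfolding u_def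
      by (intro integrable_continuous_interval continuous_intros cf)
    have mG: "mean G \<rho> = integral {0..1} (\<lambda>t. u t * (cmod (of_real \<rho> * ce t - z0))\<^sup>2)"
      unfolding mean_def G_def u_def by (simp add: norm_mult power_mult_distrib)
    have pw: "u t * (cmod (of_real \<rho> * ce t - z0))\<^sup>2 \<le> 2 * (u t * (cmod (ce t - z0))\<^sup>2) + 2 * (1 - \<rho>)\<^sup>2 * u t" for t
    proof -
      have "of_real \<rho> * ce t - z0 = (ce t - z0) - of_real (1 - \<rho>) * ce t" by (simp add: algebra_simps)
      then have "cmod (of_real \<rho> * ce t - z0) \<le> cmod (ce t - z0) + cmod (of_real (1 - \<rho>) * ce t)"
        by (metis norm_triangle_ineq4)
      also have "cmod (of_real (1 - \<rho>) * ce t) = 1 - \<rho>" using \<rho> by (simp add: norm_mult del: of_real_diff)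
      finally have le: "cmod (of_real \<rho> * ce t - z0) \<le> cmod (ce t - z0) + (1 - \<rho>)" .
      have "(cmod (of_real \<rho> * ce t - z0))\<^sup>2 \<le> (cmod (ce t - z0) + (1 - \<rho>))\<^sup>2"
        using le by (intro power_mono) auto
      also have "\<dots> \<le> 2 * (cmod (ce t - z0))\<^sup>2 + 2 * (1 - \<rho>)\<^sup>2"
        using sum_squares_bound[of "cmod (ce t - z0)" "1 - \<rho>"]
        by (simp add: power2_eq_square algebra_simps)
      finally have "(cmod (of_real \<rho> * ce t - z0))\<^sup>2 \<le> 2 * (cmod (ce t - z0))\<^sup>2 + 2 * (1 - \<rho>)\<^sup>2" .
      then have "u t * (cmod (of_real \<rho> * ce t - z0))\<^sup>2 \<le> u t * (2 * (cmod (ce t - z0))\<^sup>2 + 2 * (1 - \<rho>)\<^sup>2)"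
        by (rule mult_left_mono) (simp add: u_def)
      then show ?thesis by (simp add: algebra_simps)
    qed
    have "mean G \<rho> \<le> integral {0..1} (\<lambda>t. 2 * (u t * (cmod (ce t - z0))\<^sup>2) + 2 * (1 - \<rho>)\<^sup>2 * u t)"
      unfolding mG by (rule integral_le[OF iG _ pw]) (intro integrable_add integrable_on_mult_right iJ iu)
    also have "\<dots> = integral {0..1} (\<lambda>t. 2 * (u t * (cmod (ce t - z0))\<^sup>2)) + integral {0..1} (\<lambda>t. 2 * (1 - \<rho>)\<^sup>2 * u t)"
      by (rule integral_add) (intro integrable_on_mult_right iJ iu)+
    also have "\<dots> = 2 * J \<rho> + 2 * (1 - \<rho>)\<^sup>2 * mean f \<rho>"
      by (simp add: J_def mean_def u_def)
    finally have A: "mean G \<rho> \<le> 2 * J \<rho> + 2 * (1 - \<rho>)\<^sup>2 * mean f \<rho>" .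
    have B: "m0 \<le> mean G \<rho>" unfolding m0_def by (rule mean_mono[OF holG]) (use \<rho> in auto)
    have C: "mean f \<rho> \<le> N" unfolding N_def by (rule mean_le_norm[OF hf sf]) (use \<rho> in auto)
    have "(1 - \<rho>)\<^sup>2 * mean f \<rho> \<le> (1 - \<rho>)\<^sup>2 * N" using C by (intro mult_left_mono) auto
    then show ?thesis using A B by simp
  qed
  have hfc: "(f \<circ> \<phi>) holomorphic_on ball 0 1"
    by (rule holomorphic_on_compose_gen[OF hol hf into])
  define \<delta> where "\<delta> = c * s * m0 / 16"
  have \<delta>: "0 < \<delta>" using c0 s m0 by (simp add: \<delta>_def)
  have key: "mean (f \<circ> \<phi>) r \<le> c * N - \<delta>" if r: "0 \<le> r" "r < 1" for r
  proof -
    define r' where "r' = (1 + r) / 2"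
    have r': "r < r'" "r' < 1" "0 < r'" using r by (auto simp: r'_def)
    have sub: "cball 0 r' \<subseteq> ball 0 1" using r' by auto
    have "continuous_on (cball 0 r') (\<lambda>z. cmod (\<phi> z))"
      using holomorphic_on_imp_continuous_on[OF holomorphic_on_subset[OF hol sub]]
      by (intro continuous_intros)
    then obtain xK where xK: "xK \<in> cball 0 r'" "\<And>y. y \<in> cball 0 r' \<Longrightarrow> cmod (\<phi> y) \<le> cmod (\<phi> xK)"
      using continuous_attains_sup[of "cball 0 r'" "\<lambda>z. cmod (\<phi> z)"] r' by auto
    define K where "K = cmod (\<phi> xK)"
    have "xK \<in> ball 0 1" using sub xK(1) by blast
    then have "\<phi> xK \<in> ball 0 1" by (rule subsetD[OF into, OF imageI])
    then have K1: "K < 1" by (simp add: K_def)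
    have sK: "s \<le> K" using xK(2)[of 0] r' by (simp add: K_def s_def a_def)
    define cq where "cq \<rho> = (1 + s / \<rho>) / (1 - s / \<rho>)" for \<rho>
    have ev1: "eventually (\<lambda>\<rho>. \<rho> \<in> {max K (1/2) <..< 1}) (at_left (1::real))"
      by (rule eventually_at_left_real) (use K1 in auto)
    have "((\<lambda>\<rho>. (1 - \<rho>)\<^sup>2 * N) \<longlongrightarrow> (1 - 1)\<^sup>2 * N) (at_left (1::real))"
      by (intro tendsto_intros)
    then have ev2: "eventually (\<lambda>\<rho>. (1 - \<rho>)\<^sup>2 * N < m0 / 4) (at_left (1::real))"
      using m0 by (intro order_tendstoD) auto
    have ev: "eventually (\<lambda>\<rho>. mean (f \<circ> \<phi>) r \<le> cq \<rho> * N - \<delta>) (at_left (1::real))"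
      using ev1 ev2
    proof eventually_elim
      case (elim \<rho>)
      then have \<rho>: "K < \<rho>" "1/2 < \<rho>" "\<rho> < 1" and small: "(1 - \<rho>)\<^sup>2 * N < m0 / 4" by auto
      have \<rho>0: "0 < \<rho>" using \<rho> by simp
      define q where "q = s / \<rho>"
      have q: "0 < q" "q < 1" "s \<le> q" using s \<rho> sK \<rho>0 by (auto simp: q_def field_simps)
      define \<psi> where "\<psi> z = \<phi> z / of_real \<rho>" for z
      define g where "g w = f (of_real \<rho> * w)" for w
      have hol\<psi>: "\<psi> holomorphic_on ball 0 r'"
        unfolding \<psi>_def using \<rho>0 by (intro holomorphic_intros holomorphic_on_subset[OF hol]) (use r' in auto)
      have in\<psi>: "cmod (\<psi> z) < 1" if "z \<in> ball 0 r'" for z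
      proof -
        have "cmod (\<phi> z) \<le> K" using xK(2)[of z] that by (auto simp: K_def)
        then show ?thesis using \<rho> \<rho>0 by (simp add: \<psi>_def norm_divide divide_less_eq)
      qed
      have R1: "1 < 1 / \<rho>" using \<rho> \<rho>0 by (simp add: field_simps)
      have holg: "g holomorphic_on ball 0 (1 / \<rho>)"
      proof -
        have "(\<lambda>w::complex. of_real \<rho> * w) ` ball 0 (1 / \<rho>) \<subseteq> ball 0 1"
        proof
          fix y assume "y \<in> (\<lambda>w::complex. of_real \<rho> * w) ` ball 0 (1 / \<rho>)"
          then obtain w where w: "cmod w < 1 / \<rho>" "y = of_real \<rho> * w" by auto
          then have "\<rho> * cmod w < 1" using \<rho>0 by (simp add: field_simps)
          then show "y \<in> ball 0 1" using w \<rho>0 by (simp add: norm_mult)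
        qed
        then have "(f \<circ> (\<lambda>w. of_real \<rho> * w)) holomorphic_on ball 0 (1 / \<rho>)"
          by (intro holomorphic_on_compose_gen[OF _ hf]) (auto intro!: holomorphic_intros)
        moreover have "g = (\<lambda>w. f (of_real \<rho> * w))" by (rule ext) (simp add: g_def)
        ultimately show ?thesis by (simp add: o_def)
      qed
      note SB = subord_bound[OF holg R1 hol\<psi> in\<psi> r(1) r'(1)]
      have lhs: "g (\<psi> (of_real r * ce t)) = (f \<circ> \<phi>) (of_real r * ce t)" for t
        using \<rho>0 by (simp add: g_def \<psi>_def)
      have psi0: "\<psi> 0 = of_real q * z0"
        using s \<rho>0 by (simp add: \<psi>_def q_def z0_def a_def[symmetric] field_simps)
      define u where "u t = (cmod (f (of_real \<rho> * ce t)))\<^sup>2" for t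
      have cf: "continuous_on {0..1} (\<lambda>t. f (of_real \<rho> * ce t))"
        by (rule cont_on_circle[OF hf]) (use \<rho> in auto)
      have iu: "u integrable_on {0..1}" unfolding u_def
        by (intro integrable_continuous_interval continuous_intros cf)
      have iJ: "(\<lambda>t. u t * (cmod (ce t - z0))\<^sup>2) integrable_on {0..1}" unfolding u_def
        by (intro integrable_continuous_interval continuous_intros cf)
      have iP: "(\<lambda>t. u t * pk (\<psi> 0) (ce t)) integrable_on {0..1}"
      proof -
        have nz: "ce t \<noteq> \<psi> 0" for t using psi0 q z0 by (auto simp: norm_mult dest: arg_cong[of _ _ cmod])
        show ?thesis unfolding u_def pk_def
          by (intro integrable_continuous_interval continuous_intros cf) (use nz in auto)
      qed
      have "mean (f \<circ> \<phi>) r = integral {0..1} (\<lambda>t. (cmod (g (\<psi> (of_real r * ce t))))\<^sup>2)"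
        unfolding mean_def lhs ..
      also have "\<dots> \<le> integral {0..1} (\<lambda>t. (cmod (g (ce t)))\<^sup>2 * pk (\<psi> 0) (ce t))" by (rule SB)
      also have "\<dots> = integral {0..1} (\<lambda>t. u t * pk (\<psi> 0) (ce t))" by (simp add: u_def g_def)
      also have "\<dots> \<le> integral {0..1} (\<lambda>t. cq \<rho> * u t - (cq \<rho> * q / 4) * (u t * (cmod (ce t - z0))\<^sup>2))"
      proof (rule integral_le[OF iP])
        show "(\<lambda>t. cq \<rho> * u t - (cq \<rho> * q / 4) * (u t * (cmod (ce t - z0))\<^sup>2)) integrable_on {0..1}"
          by (intro integrable_diff integrable_on_mult_right iJ iu)
        fix t
        have "pk (\<psi> 0) (ce t) \<le> (1 + q) / (1 - q) - (1 + q) / (1 - q) * q * (cmod (ce t - z0))\<^sup>2 / 4"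
          unfolding psi0 by (rule pk_bound[OF q(1,2) z0 norm_ce])
        then have "u t * pk (\<psi> 0) (ce t) \<le> u t * ((1 + q) / (1 - q) - (1 + q) / (1 - q) * q * (cmod (ce t - z0))\<^sup>2 / 4)"
          by (rule mult_left_mono) (simp add: u_def)
        then show "u t * pk (\<psi> 0) (ce t) \<le> cq \<rho> * u t - (cq \<rho> * q / 4) * (u t * (cmod (ce t - z0))\<^sup>2)"
          by (simp add: cq_def q_def[symmetric] algebra_simps)
      qed
      also have "\<dots> = integral {0..1} (\<lambda>t. cq \<rho> * u t) - integral {0..1} (\<lambda>t. (cq \<rho> * q / 4) * (u t * (cmod (ce t - z0))\<^sup>2))"
        by (rule integral_diff) (intro integrable_on_mult_right iJ iu)+
      also have "\<dots> = cq \<rho> * mean f \<rho> - (cq \<rho> * q / 4) * J \<rho>"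
        by (simp add: J_def mean_def u_def)
      also have "\<dots> \<le> cq \<rho> * N - \<delta>"
      proof -
        have cqc: "c \<le> cq \<rho>" unfolding c_def cq_def q_def[symmetric] by (rule cq_mono) (use s q in auto)
        have "mean f \<rho> \<le> N" unfolding N_def by (rule mean_le_norm[OF hf sf]) (use \<rho> in auto)
        then have A: "cq \<rho> * mean f \<rho> \<le> cq \<rho> * N" using cqc c0 by (intro mult_left_mono) auto
        have Jl: "m0 / 4 \<le> J \<rho>" using Jlow[of \<rho>] \<rho> small by simp
        have "c * s \<le> cq \<rho> * q" using cqc q s c0 by (intro mult_mono) auto
        moreover have "0 < c * s" using c0 s by simp
        ultimately have "c * s * (m0 / 4) \<le> cq \<rho> * q * J \<rho>"
          using Jl m0 by (intro mult_mono[where a="c * s"]) auto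
        then have "\<delta> \<le> (cq \<rho> * q / 4) * J \<rho>" by (simp add: \<delta>_def mult_ac)
        then show ?thesis using A by simp
      qed
      finally show ?case .
    qed
    have lim: "((\<lambda>\<rho>. cq \<rho> * N - \<delta>) \<longlongrightarrow> ((1 + s / 1) / (1 - s / 1) * N - \<delta>)) (at_left (1::real))"
      unfolding cq_def using s by (intro tendsto_intros) auto
    have "mean (f \<circ> \<phi>) r \<le> (1 + s / 1) / (1 - s / 1) * N - \<delta>"
      by (rule tendsto_le[OF trivial_limit_at_left_real lim tendsto_const ev])
    then show ?thesis by (simp add: c_def)
  qed
  have "summable (\<lambda>n. (cmod (taylor_coeff (f \<circ> \<phi>) n))\<^sup>2) \<and> (\<Sum>n. (cmod (taylor_coeff (f \<circ> \<phi>) n))\<^sup>2) \<le> c * N - \<delta>"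
    by (rule h2_bound[OF _ mean_sums[OF hfc] key]) auto
  then have le: "(\<Sum>n. (cmod (taylor_coeff (f \<circ> \<phi>) n))\<^sup>2) < c * N" using \<delta> by simp
  have "H2_norm (f \<circ> \<phi>) < sqrt (c * N)"
    unfolding H2_norm_def using le by (simp add: real_sqrt_less_mono)
  also have "\<dots> = sqrt c * H2_norm f" by (simp add: H2_norm_def N_def real_sqrt_mult)
  finally show ?thesis by (simp add: c_def s_def a_def)
qed



theorem theorem2p1:
  fixes \<phi> f :: "complex \<Rightarrow> complex"
  assumes "inner_function \<phi>"
    and "\<phi> 0 \<noteq> 0"
    and "f \<in> H2"
  shows "H2_norm (f \<circ> \<phi>) = sqrt ((1 + cmod (\<phi> 0)) / (1 - cmod (\<phi> 0))) * H2_norm f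
         \<longleftrightarrow> (\<forall>z\<in>unit_disc. f z = 0)"
proof -
  have hol: "\<phi> holomorphic_on ball 0 1" and into: "\<phi> ` ball 0 1 \<subseteq> ball 0 1"
    using assms(1) unfolding inner_function_def by auto
  have hf: "f holomorphic_on ball 0 1" and sf: "summable (\<lambda>n. (cmod (taylor_coeff f n))\<^sup>2)"
    using assms(3) unfolding H2_def by auto
  show ?thesis
  proof
    assume eq: "H2_norm (f \<circ> \<phi>) = sqrt ((1 + cmod (\<phi> 0)) / (1 - cmod (\<phi> 0))) * H2_norm f"
    show "\<forall>z\<in>unit_disc. f z = 0"
    proof (rule ccontr)
      assume "\<not> (\<forall>z\<in>unit_disc. f z = 0)"
      then obtain z1 where "z1 \<in> ball 0 1" "f z1 \<noteq> 0" by auto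
      from main_ineq[OF hol into assms(2) hf sf this] eq show False by simp
    qed
  next
    assume Z: "\<forall>z\<in>unit_disc. f z = 0"
    have "taylor_coeff f n = 0" for n by (rule taylor_coeff_zero) (use Z in auto)
    then have n1: "H2_norm f = 0" by (simp add: H2_norm_def)
    have "(f \<circ> \<phi>) z = 0" if "z \<in> ball 0 1" for z
    proof -
      have "\<phi> z \<in> ball 0 1" using into that by blast
      then show ?thesis using Z by simp
    qed
    then have "taylor_coeff (f \<circ> \<phi>) n = 0" for n by (rule taylor_coeff_zero)
    then have "H2_norm (f \<circ> \<phi>) = 0" by (simp add: H2_norm_def)
    with n1 show "H2_norm (f \<circ> \<phi>) = sqrt ((1 + cmod (\<phi> 0)) / (1 - cmod (\<phi> 0))) * H2_norm f" by simp
  qed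
qed

end
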